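(* Let $G=(V,E)$ be a non-bipartite graph with $n=|V|\ge 5$ vertices, and let $K,K'$ be $k$-cliques of $G$ where $n-k-1=\binom{k}{2}$. Let $H$ be the bipartite graph with vertex set $V\cup E$ (bipartition $\{V,E\}$) and edge set $\{\{v,e\} : v\in V,\ e\in E,\ v\notin e\}$. Let $p=n-k-1$. Let $S$ be obtained from $(V\setminus K)\cup E(K)$ by removing an arbitrary vertex of $V\setminus K$, and let $S'$ be obtained from $(V\setminus K')\cup E(K')$ by removing an arbitrary vertex of $V\setminus K'$ (so $S,S'$ are $(p,p)$-bicliques of $H$). If there is a TJ-sequence of $k$-cliques from $K$ to $K'$ in $G$, then there is a TJ-sequence of $(p,p)$-bicliques from $S$ to $S'$ in $H$.
   Context: For $U\subseteq V$, $E(U)$ denotes the set of edges of $G$ with both endpoints in $U$. A $k$-clique is a set of $k$ pairwise adjacent vertices. A TJ-sequence of $k$-cliques is a sequence $K_0,\dots,K_\ell$ of $k$-cliques with $|K_i\setminus K_{i+1}|=|K_{i+1}\setminus K_i|=1$ for all $i$. A vertex set $S$ is a $(p,q)$-biclique of $H$ if $H[S]$ is isomorphic to $K_{p,q}$; a TJ-sequence of $(p,p)$-bicliques is a sequence $S_0,\dots,S_\ell$ of $(p,p)$-bicliques with $|S_i\setminus S_{i+1}|=|S_{i+1}\setminus S_i|=1$ for all $i$. *)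

theory Defs
  imports Main
begin

definition simple_graph :: "'a set \<Rightarrow> 'a set set \<Rightarrow> bool" where
  "simple_graph V E \<longleftrightarrow> finite V \<and> (\<forall>e\<in>E. e \<subseteq> V \<and> card e = 2)"

definition bipartite :: "'a set \<Rightarrow> 'a set set \<Rightarrow> bool" where
  "bipartite V E \<longleftrightarrow> (\<exists>A B. A \<inter> B = {} \<and> A \<union> B = V \<and>
      (\<forall>e\<in>E. e \<inter> A \<noteq> {} \<and> e \<inter> B \<noteq> {}))"

definition edges_in :: "'a set set \<Rightarrow> 'a set \<Rightarrow> 'a set set" where
  "edges_in E U = {e \<in> E. e \<subseteq> U}"

definition is_clique :: "'a set \<Rightarrow> 'a set set \<Rightarrow> nat \<Rightarrow> 'a set \<Rightarrow> bool" where
  "is_clique V E k K \<longleftrightarrow> K \<subseteq> V \<and> finite K \<and> card K = k \<and>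
      (\<forall>u\<in>K. \<forall>v\<in>K. u \<noteq> v \<longrightarrow> {u, v} \<in> E)"

definition is_biclique :: "'b set \<Rightarrow> 'b set set \<Rightarrow> nat \<Rightarrow> nat \<Rightarrow> 'b set \<Rightarrow> bool" where
  "is_biclique VH EH p q S \<longleftrightarrow> S \<subseteq> VH \<and>
     (\<exists>A B. A \<inter> B = {} \<and> A \<union> B = S \<and> finite A \<and> finite B \<and> card A = p \<and> card B = q \<and>
        {e \<in> EH. e \<subseteq> S} = {{a, b} | a b. a \<in> A \<and> b \<in> B})"

definition tj_seq :: "('b set \<Rightarrow> bool) \<Rightarrow> 'b set list \<Rightarrow> 'b set \<Rightarrow> 'b set \<Rightarrow> bool" where
  "tj_seq P xs X Y \<longleftrightarrow> xs \<noteq> [] \<and> hd xs = X \<and> last xs = Y \<and> (\<forall>Z\<in>set xs. P Z) \<and>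
     (\<forall>i. Suc i < length xs \<longrightarrow>
        card (xs ! i - xs ! Suc i) = 1 \<and> card (xs ! Suc i - xs ! i) = 1)"

definition H_vertices :: "'a set \<Rightarrow> 'a set set \<Rightarrow> ('a + 'a set) set" where
  "H_vertices V E = Inl ` V \<union> Inr ` E"

definition H_edges :: "'a set \<Rightarrow> 'a set set \<Rightarrow> ('a + 'a set) set set" where
  "H_edges V E = {{Inl v, Inr e} | v e. v \<in> V \<and> e \<in> E \<and> v \<notin> e}"

end

theory Submission
  imports Defs
begin

inductive reach :: "('b set \<Rightarrow> bool) \<Rightarrow> 'b set \<Rightarrow> 'b set \<Rightarrow> bool" for P where
  r0: "P X \<Longrightarrow> reach P X X"
| rs: "reach P X Y \<Longrightarrow> P Z \<Longrightarrow> card (Y - Z) = 1 \<Longrightarrow> card (Z - Y) = 1 \<Longrightarrow> reach P X Z"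

lemma reach_P: "reach P X Y \<Longrightarrow> P X \<and> P Y"
  by (induction rule: reach.induct) auto

lemma reach_trans: "reach P Y Z \<Longrightarrow> reach P X Y \<Longrightarrow> reach P X Z"
  by (induction rule: reach.induct) (auto intro: reach.rs)

lemma reach_tj: "reach P X Y \<Longrightarrow> \<exists>xs. tj_seq P xs X Y"
proof (induction rule: reach.induct)
  case (r0 X)
  then show ?case by (intro exI[of _ "[X]"]) (simp add: tj_seq_def)
next
  case (rs X Y Z)
  then obtain xs where xs: "tj_seq P xs X Y" by blast
  have A: "xs @ [Z] \<noteq> [] \<and> hd (xs @ [Z]) = X \<and> last (xs @ [Z]) = Z \<and> (\<forall>Za\<in>set (xs @ [Z]). P Za)"
    using xs rs by (auto simp: tj_seq_def)
  have B: "\<forall>i. Suc i < length (xs @ [Z]) \<longrightarrow>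
        card ((xs @ [Z]) ! i - (xs @ [Z]) ! Suc i) = 1 \<and> card ((xs @ [Z]) ! Suc i - (xs @ [Z]) ! i) = 1"
  proof (intro allI impI)
    fix i assume i: "Suc i < length (xs @ [Z])"
    show "card ((xs @ [Z]) ! i - (xs @ [Z]) ! Suc i) = 1 \<and> card ((xs @ [Z]) ! Suc i - (xs @ [Z]) ! i) = 1"
    proof (cases "Suc i < length xs")
      case True
      then show ?thesis using xs by (simp add: tj_seq_def nth_append)
    next
      case False
      then have "i = length xs - 1" "xs \<noteq> []" using i xs by (auto simp: tj_seq_def)
      then have "xs ! i = Y" "(xs @ [Z]) ! Suc i = Z" using xs
        by (auto simp: tj_seq_def last_conv_nth nth_append)
      then show ?thesis using rs \<open>i = length xs - 1\<close> \<open>xs \<noteq> []\<close> by (simp add: nth_append)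
    qed
  qed
  have "tj_seq P (xs @ [Z]) X Z" using A B unfolding tj_seq_def by blast
  then show ?case by blast
qed

lemma one_step:
  assumes "reach P X Y" "P Z" "Y - Z = {a}" "Z - Y = {b}"
  shows "reach P X Z"
  using assms by (intro reach.rs[of P X Y Z]) auto

lemma good_bic:
  assumes "simple_graph V E" "A0 \<subseteq> V" "F \<subseteq> E" "card A0 = p" "card F = p"
    "\<forall>v\<in>A0. \<forall>f\<in>F. v \<notin> f"
  shows "is_biclique (H_vertices V E) (H_edges V E) p p (Inl ` A0 \<union> Inr ` F)"
proof -
  have fV: "finite V" using assms(1) by (simp add: simple_graph_def)
  have "E \<subseteq> Pow V" using assms(1) by (auto simp: simple_graph_def)
  then have fE: "finite E" using fV by (meson finite_Pow_iff finite_subset)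
  have fA: "finite A0" using fV assms(2) finite_subset by blast
  have fF: "finite F" using fE assms(3) finite_subset by blast
  have c1: "card (Inl ` A0 :: ('a + 'a set) set) = p" using assms(4) by (simp add: card_image)
  have c2: "card (Inr ` F :: ('a + 'a set) set) = p" using assms(5) by (simp add: card_image)
  have eq: "{e \<in> H_edges V E. e \<subseteq> Inl ` A0 \<union> Inr ` F} = {{a, b} | a b. a \<in> Inl ` A0 \<and> b \<in> Inr ` F}"
    using assms(2,3,6) unfolding H_edges_def by blast
  show ?thesis unfolding is_biclique_def
    apply (rule conjI)
    using assms(2,3) apply (auto simp: H_vertices_def)[1]
    apply (rule exI[of _ "Inl ` A0"], rule exI[of _ "Inr ` F"])
    using assms(2,3) fA fF c1 c2 eq by (auto simp: H_vertices_def)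
qed

lemma swap_diff:
  assumes "a \<in> F" "b \<notin> F"
  shows "(Inl ` A \<union> Inr ` F) - (Inl ` A \<union> Inr ` (insert b (F - {a}))) = {Inr a}"
    and "(Inl ` A \<union> Inr ` (insert b (F - {a}))) - (Inl ` A \<union> Inr ` F) = {Inr b}"
  using assms by auto

lemma edge2:
  assumes "simple_graph V E" "e \<in> E"
  obtains a b where "e = {a, b}" "a \<noteq> b"
  using assms unfolding simple_graph_def by (metis card_2_iff)

lemma edges_clique_card:
  assumes "simple_graph V E" "is_clique V E k K"
  shows "card (edges_in E K) = k choose 2"
proof -
  have "edges_in E K = {B. B \<subseteq> K \<and> card B = 2}"
  proof (intro equalityI subsetI)
    fix e assume "e \<in> edges_in E K"
    then show "e \<in> {B. B \<subseteq> K \<and> card B = 2}"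
      using assms(1) by (auto simp: edges_in_def simple_graph_def)
  next
    fix e assume "e \<in> {B. B \<subseteq> K \<and> card B = 2}"
    then obtain a b where "e = {a,b}" "a \<noteq> b" "e \<subseteq> K" by (auto simp: card_2_iff)
    then show "e \<in> edges_in E K" using assms(2) by (auto simp: edges_in_def is_clique_def)
  qed
  then show ?thesis using assms(2) n_subsets[of K 2] by (simp add: is_clique_def)
qed

lemma S_eq: "(Inl ` (V - K) \<union> Inr ` edges_in E K) - {Inl x} = Inl ` (V - K - {x}) \<union> Inr ` edges_in E K"
  by auto

lemma S_bic:
  assumes "simple_graph V E" "is_clique V E k K" "x \<in> V - K" "p = card V - k - 1" "k choose 2 = p"
  shows "is_biclique (H_vertices V E) (H_edges V E) p p (Inl ` (V - K - {x}) \<union> Inr ` edges_in E K)"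
proof (rule good_bic[OF assms(1)])
  have fV: "finite V" using assms(1) by (simp add: simple_graph_def)
  have "card (V - K - {x}) = card (V - K) - 1" using assms(3) by (simp add: card_Diff_singleton)
  also have "card (V - K) = card V - k" using assms(2) fV by (simp add: card_Diff_subset is_clique_def)
  finally show "card (V - K - {x}) = p" using assms(4) by simp
  show "card (edges_in E K) = p" using edges_clique_card[OF assms(1,2)] assms(5) by simp
qed (auto simp: edges_in_def)

lemma vswap:
  assumes "simple_graph V E" "is_clique V E k K" "x \<in> V - K" "y \<in> V - K" "p = card V - k - 1" "k choose 2 = p"
  shows "reach (is_biclique (H_vertices V E) (H_edges V E) p p)
     (Inl ` (V - K - {x}) \<union> Inr ` edges_in E K) (Inl ` (V - K - {y}) \<union> Inr ` edges_in E K)"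
proof (cases "x = y")
  case True
  then show ?thesis using S_bic[OF assms(1,2,3,5,6)] by (simp add: reach.r0)
next
  case False
  have r: "reach (is_biclique (H_vertices V E) (H_edges V E) p p)
     (Inl ` (V - K - {x}) \<union> Inr ` edges_in E K) (Inl ` (V - K - {x}) \<union> Inr ` edges_in E K)"
    using S_bic[OF assms(1,2,3,5,6)] by (simp add: reach.r0)
  show ?thesis
    apply (rule one_step[OF r S_bic[OF assms(1,2,4,5,6)], of "Inl y" "Inl x"])
    using False assms(3,4) by (auto simp: edges_in_def)
qed

lemma echain:
  assumes sg: "simple_graph V E" and cK: "is_clique V E k K" and cK': "is_clique V E k K'"
    and K: "K = insert u C" and K': "K' = insert w C" and u: "u \<notin> C" and w: "w \<notin> C" and uw: "u \<noteq> w"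
    and pk: "p = card V - k - 1" and kp: "k choose 2 = p"
  shows "reach (is_biclique (H_vertices V E) (H_edges V E) p p)
     (Inl ` (V - K - {w}) \<union> Inr ` edges_in E K) (Inl ` (V - K' - {u}) \<union> Inr ` edges_in E K')"
proof -
  let ?P = "is_biclique (H_vertices V E) (H_edges V E) p p"
  define A0 where "A0 = V - K - {w}"
  have A0': "V - K' - {u} = A0" unfolding A0_def K K' by auto
  define F where "F D = (edges_in E K - (\<lambda>c. {u,c}) ` D) \<union> (\<lambda>c. {w,c}) ` D" for D
  have fV: "finite V" using sg by (simp add: simple_graph_def)
  have fC: "finite C" using cK K by (simp add: is_clique_def)
  have wV: "w \<in> V" and uV: "u \<in> V" using cK cK' K K' by (auto simp: is_clique_def)
  have cA0: "card A0 = p"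
  proof -
    have "card A0 = card (V - K) - 1" unfolding A0_def using wV w uw K by (simp add: card_Diff_singleton)
    also have "card (V - K) = card V - k" using cK fV by (simp add: card_Diff_subset is_clique_def)
    finally show ?thesis using pk by simp
  qed
  have A0V: "A0 \<subseteq> V" unfolding A0_def by auto
  have inv: "reach ?P (Inl ` A0 \<union> Inr ` F {}) (Inl ` A0 \<union> Inr ` F D) \<and> card (F D) = p
        \<and> F D \<subseteq> E \<and> (\<forall>f\<in>F D. f \<subseteq> insert w K)" if "D \<subseteq> C" for D
    using finite_subset[OF that fC] that
  proof (induction D rule: finite_subset_induct')
    case empty
    have "card (F {}) = p" using edges_clique_card[OF sg cK] kp by (simp add: F_def)
    moreover have "F {} \<subseteq> E" "\<forall>f\<in>F {}. f \<subseteq> insert w K" by (auto simp: F_def edges_in_def)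
    moreover have "\<forall>v\<in>A0. \<forall>f\<in>F {}. v \<notin> f" using \<open>\<forall>f\<in>F {}. f \<subseteq> insert w K\<close> unfolding A0_def by blast
    ultimately show ?case using good_bic[OF sg A0V, of "F {}" p] cA0 by (auto intro: reach.r0)
  next
    case (insert c D)
    have cC: "c \<in> C" "c \<notin> D" "D \<subseteq> C" using insert by auto
    have a_in: "{u,c} \<in> F D"
    proof -
      have "{u,c} \<in> edges_in E K" using cK K cC u by (auto simp: is_clique_def edges_in_def)
      moreover have "{u,c} \<notin> (\<lambda>c. {u,c}) ` D" using cC u by (auto simp: doubleton_eq_iff)
      ultimately show ?thesis unfolding F_def by blast
    qed
    have b_E: "{w,c} \<in> E" using cK' K' cC w by (auto simp: is_clique_def)
    have b_out: "{w,c} \<notin> F D"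
    proof -
      have "{w,c} \<notin> edges_in E K" using K w uw by (auto simp: edges_in_def)
      moreover have "{w,c} \<notin> (\<lambda>c. {w,c}) ` D" using cC w by (auto simp: doubleton_eq_iff)
      ultimately show ?thesis unfolding F_def by blast
    qed
    have Feq: "F (insert c D) = insert {w,c} (F D - {{u,c}})"
    proof -
      have "{w,c} \<notin> (\<lambda>c. {u,c}) ` insert c D" using uw w cC by (auto simp: doubleton_eq_iff)
      moreover have "\<forall>c'\<in>D. {u,c} \<noteq> {w,c'}" using uw u cC by (auto simp: doubleton_eq_iff)
      ultimately show ?thesis unfolding F_def by auto
    qed
    have "E \<subseteq> Pow V" using sg by (auto simp: simple_graph_def)
    then have "finite E" using fV by (meson finite_Pow_iff finite_subset)
    then have fF: "finite (F D)" using insert.IH by (meson finite_subset)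
    have cF: "card (F (insert c D)) = p"
    proof -
      have "card (F D) > 0" using fF a_in card_gt_0_iff by blast
      then show ?thesis using insert.IH a_in b_out fF Feq by (simp add: card_Diff_singleton)
    qed
    have subE: "F (insert c D) \<subseteq> E" using insert.IH b_E Feq by auto
    have subK: "\<forall>f\<in>F (insert c D). f \<subseteq> insert w K" using insert.IH Feq K cC by auto
    have disj: "\<forall>v\<in>A0. \<forall>f\<in>F (insert c D). v \<notin> f" using subK unfolding A0_def by blast
    have P': "?P (Inl ` A0 \<union> Inr ` F (insert c D))"
      using good_bic[OF sg A0V subE cA0 cF disj] .
    have r: "reach ?P (Inl ` A0 \<union> Inr ` F {}) (Inl ` A0 \<union> Inr ` F (insert c D))"
      apply (rule one_step[OF conjunct1[OF insert.IH] P', of "Inr {u,c}" "Inr {w,c}"])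
      unfolding Feq using swap_diff[OF a_in b_out, of A0] by simp_all
    show ?case using r cF subE subK by blast
  qed
  have F0: "F {} = edges_in E K" by (simp add: F_def)
  have FC: "F C = edges_in E K'"
  proof (intro equalityI subsetI)
    fix e assume e: "e \<in> F C"
    show "e \<in> edges_in E K'"
    proof (cases "e \<in> (\<lambda>c. {w,c}) ` C")
      case True
      then show ?thesis using cK' K' w by (auto simp: is_clique_def edges_in_def)
    next
      case False
      then have e1: "e \<in> edges_in E K" "e \<notin> (\<lambda>c. {u,c}) ` C" using e by (auto simp: F_def)
      then have "e \<in> E" "e \<subseteq> insert u C" using K by (auto simp: edges_in_def)
      then obtain a b where ab: "e = {a,b}" "a \<noteq> b" using edge2[OF sg] by metis
      have "a \<noteq> u" using ab e1 \<open>e \<subseteq> insert u C\<close> by auto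
      moreover have "b \<noteq> u" using ab e1 \<open>e \<subseteq> insert u C\<close> by (auto simp: insert_commute)
      ultimately show ?thesis using ab \<open>e \<in> E\<close> \<open>e \<subseteq> insert u C\<close> K' by (auto simp: edges_in_def)
    qed
  next
    fix e assume e: "e \<in> edges_in E K'"
    then have "e \<in> E" "e \<subseteq> insert w C" using K' by (auto simp: edges_in_def)
    then obtain a b where ab: "e = {a,b}" "a \<noteq> b" using edge2[OF sg] by metis
    show "e \<in> F C"
    proof (cases "w \<in> e")
      case True
      then have "e \<in> (\<lambda>c. {w,c}) ` C" using ab \<open>e \<subseteq> insert w C\<close> by (auto simp: insert_commute)
      then show ?thesis by (simp add: F_def)
    next
      case False
      then have "e \<subseteq> C" using \<open>e \<subseteq> insert w C\<close> by auto
      then have "e \<in> edges_in E K" "e \<notin> (\<lambda>c. {u,c}) ` C" using \<open>e \<in> E\<close> K u by (auto simp: edges_in_def)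
      then show ?thesis by (simp add: F_def)
    qed
  qed
  show ?thesis using conjunct1[OF inv[of C]] F0 FC A0' unfolding A0_def by simp
qed

lemma cstep:
  assumes sg: "simple_graph V E" and cK: "is_clique V E k K" and cK': "is_clique V E k K'"
    and d1: "card (K - K') = 1" and d2: "card (K' - K) = 1"
    and x: "x \<in> V - K" and x': "x' \<in> V - K'"
    and pk: "p = card V - k - 1" and kp: "k choose 2 = p"
  shows "reach (is_biclique (H_vertices V E) (H_edges V E) p p)
     (Inl ` (V - K - {x}) \<union> Inr ` edges_in E K) (Inl ` (V - K' - {x'}) \<union> Inr ` edges_in E K')"
proof -
  obtain u where u: "K - K' = {u}" using d1 by (auto simp: card_1_singleton_iff)
  obtain w where w: "K' - K = {w}" using d2 by (auto simp: card_1_singleton_iff)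
  define C where "C = K \<inter> K'"
  have K: "K = insert u C" and K': "K' = insert w C" using u w unfolding C_def by auto
  have uC: "u \<notin> C" and wC: "w \<notin> C" and uw: "u \<noteq> w" using u w unfolding C_def by auto
  have wV: "w \<in> V - K" and uV: "u \<in> V - K'" using u w cK cK' by (auto simp: is_clique_def)
  have r1: "reach (is_biclique (H_vertices V E) (H_edges V E) p p)
     (Inl ` (V - K - {x}) \<union> Inr ` edges_in E K) (Inl ` (V - K - {w}) \<union> Inr ` edges_in E K)"
    by (rule vswap[OF sg cK x wV pk kp])
  have r2: "reach (is_biclique (H_vertices V E) (H_edges V E) p p)
     (Inl ` (V - K - {w}) \<union> Inr ` edges_in E K) (Inl ` (V - K' - {u}) \<union> Inr ` edges_in E K')"
    by (rule echain[OF sg cK cK' K K' uC wC uw pk kp])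
  have r3: "reach (is_biclique (H_vertices V E) (H_edges V E) p p)
     (Inl ` (V - K' - {u}) \<union> Inr ` edges_in E K') (Inl ` (V - K' - {x'}) \<union> Inr ` edges_in E K')"
    by (rule vswap[OF sg cK' uV x' pk kp])
  show ?thesis using reach_trans[OF r3 reach_trans[OF r2 r1]] .
qed

lemma seq:
  assumes sg: "simple_graph V E" and pk: "p = card V - k - 1" and kp: "k choose 2 = p"
    and kV: "k < card V"
  shows "tj_seq (is_clique V E k) xs X Y \<Longrightarrow> x \<in> V - X \<Longrightarrow> y \<in> V - Y \<Longrightarrow>
    reach (is_biclique (H_vertices V E) (H_edges V E) p p)
     (Inl ` (V - X - {x}) \<union> Inr ` edges_in E X) (Inl ` (V - Y - {y}) \<union> Inr ` edges_in E Y)"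
proof (induction xs arbitrary: X x)
  case Nil
  then show ?case by (simp add: tj_seq_def)
next
  case (Cons a xs)
  have aX: "a = X" and cX: "is_clique V E k X" using Cons.prems by (auto simp: tj_seq_def)
  show ?case
  proof (cases xs)
    case Nil
    then have "Y = X" using Cons.prems aX by (simp add: tj_seq_def)
    then show ?thesis using vswap[OF sg cX _ _ pk kp] Cons.prems by simp
  next
    case (Cons b rest)
    have t: "tj_seq (is_clique V E k) xs b Y"
      using Cons.prems(1) \<open>xs = b # rest\<close> unfolding tj_seq_def
      by (auto simp del: nth_Cons_Suc simp add: nth_Cons_Suc[symmetric])
    have cb: "is_clique V E k b" and d: "card (X - b) = 1" "card (b - X) = 1"
      using Cons.prems(1) \<open>xs = b # rest\<close> aX unfolding tj_seq_def by (auto dest: spec[of _ 0])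
    have "V - b \<noteq> {}"
    proof
      assume "V - b = {}"
      then have "V \<subseteq> b" by auto
      then have "card V \<le> card b" using cb card_mono by (auto simp: is_clique_def)
      then show False using cb kV by (simp add: is_clique_def)
    qed
    then obtain z where z: "z \<in> V - b" by blast
    note r1 = cstep[OF sg cX cb d Cons.prems(2) z pk kp]
    show ?thesis using reach_trans[OF Cons.IH[OF t z Cons.prems(3)] r1] .
  qed
qed

theorem lemma3:
  fixes V :: "'a set" and E :: "'a set set" and k p :: nat
    and K K' :: "'a set" and x x' :: 'a
  assumes "simple_graph V E"
    and "\<not> bipartite V E"
    and "card V \<ge> 5"
    and "is_clique V E k K" and "is_clique V E k K'"
    and "int (card V) - int k - 1 = int (k choose 2)"
    and "p = card V - k - 1"
    and "x \<in> V - K" and "x' \<in> V - K'"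
    and "\<exists>xs. tj_seq (is_clique V E k) xs K K'"
  shows "\<exists>ys. tj_seq (is_biclique (H_vertices V E) (H_edges V E) p p) ys
            ((Inl ` (V - K) \<union> Inr ` edges_in E K) - {Inl x})
            ((Inl ` (V - K') \<union> Inr ` edges_in E K') - {Inl x'})"
proof -
  have kV: "k < card V" using assms(6) by linarith
  have kp: "k choose 2 = p" using assms(6,7) kV by linarith
  obtain xs where xs: "tj_seq (is_clique V E k) xs K K'" using assms(10) by blast
  have "reach (is_biclique (H_vertices V E) (H_edges V E) p p)
     (Inl ` (V - K - {x}) \<union> Inr ` edges_in E K) (Inl ` (V - K' - {x'}) \<union> Inr ` edges_in E K')"
    using seq[OF assms(1,7) kp kV xs assms(8,9)] .
  then show ?thesis unfolding S_eq by (rule reach_tj)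
qed

end
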